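(* A pseudo-Kleene lattice $\mathbf A$ is super-paraorthomodular if and only if it satisfies the identity $(x\lor y)\land(x\lor x')\approx x\lor((x\lor y)\land x')$.
   Context: A pseudo-Kleene lattice is an algebra $(A,\land,\lor,{}',0,1)$ that is a bounded lattice with an antitone involution ${}'$ ($x\leq y\Rightarrow y'\leq x'$, $x''=x$) satisfying $x\land x'\leq y\lor y'$. It is super-paraorthomodular if for all $x,y$: (SP1) $x\leq y$ and $x'\land y=(x\land x')\lor(y\land y')$ imply $y\land(x\lor x')=x\lor(y\land y')$; (SP2) $x\leq y$ implies $(x\land x')\lor(y\land y')=(x'\land y)\land(x'\land y)'$. *)

theory Defs
  imports Main
begin

definition pseudo_kleene :: "('a::bounded_lattice \<Rightarrow> 'a) \<Rightarrow> bool" where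
  "pseudo_kleene c \<longleftrightarrow>
     (\<forall>x y. x \<le> y \<longrightarrow> c y \<le> c x) \<and>
     (\<forall>x. c (c x) = x) \<and>
     (\<forall>x y. inf x (c x) \<le> sup y (c y))"

definition super_paraorthomodular :: "('a::bounded_lattice \<Rightarrow> 'a) \<Rightarrow> bool" where
  "super_paraorthomodular c \<longleftrightarrow>
     (\<forall>x y. x \<le> y \<and> inf (c x) y = sup (inf x (c x)) (inf y (c y))
            \<longrightarrow> inf y (sup x (c x)) = sup x (inf y (c y))) \<and>
     (\<forall>x y. x \<le> y \<longrightarrow>
            sup (inf x (c x)) (inf y (c y)) = inf (inf (c x) y) (c (inf (c x) y)))"

end

theory Submission
  imports Defs
begin

locale pk =
  fixes c :: "'a::bounded_lattice \<Rightarrow> 'a"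
  assumes anti: "\<And>x y. x \<le> y \<Longrightarrow> c y \<le> c x"
    and inv[simp]: "\<And>x. c (c x) = x"
    and kl: "\<And>x y. inf x (c x) \<le> sup y (c y)"
begin

lemma dm_sup[simp]: "c (sup a b) = inf (c a) (c b)"
proof (rule antisym)
  show "c (sup a b) \<le> inf (c a) (c b)" by (simp add: anti)
  have "sup a b \<le> c (inf (c a) (c b))"
    by (metis anti inf.cobounded1 inf.cobounded2 inv sup.boundedI)
  then have "c (c (inf (c a) (c b))) \<le> c (sup a b)" by (rule anti)
  then show "inf (c a) (c b) \<le> c (sup a b)" by simp
qed

lemma dm_inf[simp]: "c (inf a b) = sup (c a) (c b)"
  by (metis dm_sup inv)

lemma anti_iff: "c x \<le> c y \<longleftrightarrow> y \<le> x"
  by (metis anti inv)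

end
lemma I_imp_SP:
  fixes c :: "'a::bounded_lattice \<Rightarrow> 'a"
  assumes "pk c"
    and I: "\<forall>x y. inf (sup x y) (sup x (c x)) = sup x (inf (sup x y) (c x))"
  shows "super_paraorthomodular c"
proof -
  interpret pk c by fact
  have I': "inf y (sup x (c x)) = sup x (inf y (c x))" if "x \<le> y" for x y
    using I[rule_format, of x y] that by (simp add: sup.absorb2)
  have D: "inf u (sup (inf u v) (c u)) = sup (inf u v) (inf u (c u))" for u v
  proof -
    have "c (inf (sup (c u) (c v)) (sup (c u) u)) = c (sup (c u) (inf (sup (c u) (c v)) u))"
      using I[rule_format, of "c u" "c v"] by simp
    then show ?thesis by (simp add: inf_commute sup_commute)
  qed
  have D': "inf u (sup v (c u)) = sup v (inf u (c u))" if "v \<le> u" for u v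
    using D[of u v] that by (simp add: inf.absorb2)
  show ?thesis
    unfolding super_paraorthomodular_def
  proof (intro conjI allI impI)
    fix x y
    assume h: "x \<le> y \<and> inf (c x) y = sup (inf x (c x)) (inf y (c y))"
    then have "inf y (sup x (c x)) = sup x (inf y (c x))" using I' by blast
    also have "\<dots> = sup x (sup (inf x (c x)) (inf y (c y)))" using h by (simp add: inf_commute)
    also have "\<dots> = sup x (inf y (c y))"
      by (simp add: sup.absorb1 flip: sup.assoc)
    finally show "inf y (sup x (c x)) = sup x (inf y (c y))" .
  next
    fix x y :: 'a
    assume xy: "x \<le> y"
    have "inf (inf (c x) y) (c (inf (c x) y)) = inf (c x) (inf y (sup x (c y)))"
      by (simp add: inf_assoc)
    also have "inf y (sup x (c y)) = sup x (inf y (c y))" using D'[OF xy] .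
    also have "inf (c x) (sup x (inf y (c y))) = sup (inf y (c y)) (inf (c x) x)"
    proof -
      have le: "inf y (c y) \<le> c x" using anti[OF xy] by (meson inf.coboundedI2)
      have "inf (c x) (sup (inf y (c y)) (c (c x))) = sup (inf y (c y)) (inf (c x) (c (c x)))"
        using D'[OF le] .
      then show ?thesis by (simp add: sup_commute)
    qed
    finally show "sup (inf x (c x)) (inf y (c y)) = inf (inf (c x) y) (c (inf (c x) y))"
      by (simp add: sup_commute inf_commute)
  qed
qed


lemma SP_imp_I_le:
  fixes c :: "'a::bounded_lattice \<Rightarrow> 'a"
  assumes "pk c" and sp: "super_paraorthomodular c" and xy: "x \<le> y"
  shows "inf y (sup x (c x)) = sup x (inf y (c x))"
proof -
  interpret pk c by fact
  have sp1: "\<And>x y. x \<le> y \<Longrightarrow> inf (c x) y = sup (inf x (c x)) (inf y (c y))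
            \<Longrightarrow> inf y (sup x (c x)) = sup x (inf y (c y))"
    and sp2: "\<And>x y. x \<le> y \<Longrightarrow>
            sup (inf x (c x)) (inf y (c y)) = inf (inf (c x) y) (c (inf (c x) y))"
    using sp unfolding super_paraorthomodular_def by blast+
  define w where "w = inf y (c x)"
  define z where "z = sup x w"
  define b where "b = inf y (sup x (c x))"
  have cyx: "c y \<le> c x" using anti[OF xy] .
  have cw: "c w = sup (c y) x" unfolding w_def by simp
  have cz: "c z = inf (c x) (sup (c y) x)" unfolding z_def using cw by simp
  have cb: "c b = sup (c y) (inf (c x) x)" unfolding b_def by simp
  have zb: "z \<le> b" unfolding z_def w_def b_def using xy
    by (simp add: le_infI1 le_supI2 inf.coboundedI2)
  have v: "inf (c z) b = inf w (c w)" unfolding cz cw b_def w_def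
    by (rule antisym) (auto intro: le_infI1 le_infI2 le_supI1 le_supI2)
  have vle: "inf w (c w) \<le> c (inf w (c w))"
    by (simp add: le_supI1 le_supI2 inf.coboundedI1 inf.coboundedI2)
  have cond: "inf (c z) b = sup (inf z (c z)) (inf b (c b))"
  proof -
    have "sup (inf z (c z)) (inf b (c b)) = inf (inf (c z) b) (c (inf (c z) b))"
      using sp2[OF zb] .
    also have "\<dots> = inf w (c w)" unfolding v using vle by (simp add: inf.absorb1)
    finally show ?thesis using v by simp
  qed
  have r1: "inf b (sup z (c z)) = sup z (inf b (c b))" using sp1[OF zb cond] .
  have bb: "inf b (c b) \<le> z"
  proof -
    have "c b \<le> c x" unfolding cb using cyx by (simp add: le_infI1)
    moreover have "b \<le> y" unfolding b_def by simp
    ultimately have "inf b (c b) \<le> w" unfolding w_def by (simp add: le_infI1 le_infI2)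
    then show ?thesis unfolding z_def by (simp add: le_supI2)
  qed
  have r2: "inf b (sup z (c z)) = z" using r1 bb by (simp add: sup.absorb1)
  have wcx: "w \<le> c x" unfolding w_def by simp
  have e1: "sup (inf w (c w)) (inf (c x) x) = inf z (c z)"
  proof -
    have "sup (inf w (c w)) (inf (c x) (c (c x))) = inf (inf (c w) (c x)) (c (inf (c w) (c x)))"
      using sp2[OF wcx] .
    moreover have "inf (c w) (c x) = c z" unfolding z_def by (simp add: inf_commute)
    moreover have "c (c z) = z" by simp
    ultimately show ?thesis by (simp add: inf_commute)
  qed
  have e2: "sup (inf x (c x)) (inf y (c y)) = inf w (c w)"
    using sp2[OF xy] unfolding w_def by (simp add: inf_commute)
  have zz: "inf z (c z) = sup (inf x (c x)) (inf y (c y))"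
    unfolding e1[symmetric] e2[symmetric]
    by (simp add: inf_commute sup_commute sup_left_commute)
  have "inf z (c z) \<le> c b" unfolding zz cb
    by (simp add: inf_commute le_supI1 le_supI2 inf.coboundedI2)
  then have "c (c b) \<le> c (inf z (c z))" by (rule anti)
  then have "b \<le> sup z (c z)" by (simp add: sup_commute)
  then have "b = z" using r2 by (simp add: inf.absorb1)
  then show ?thesis unfolding b_def z_def w_def .
qed


theorem theorem3p5:
  fixes c :: "'a::bounded_lattice \<Rightarrow> 'a"
  assumes "pseudo_kleene c"
  shows "super_paraorthomodular c \<longleftrightarrow>
         (\<forall>x y. inf (sup x y) (sup x (c x)) = sup x (inf (sup x y) (c x)))"
proof -
  have pkc: "pk c" using assms unfolding pseudo_kleene_def by unfold_locales blast+
  show ?thesis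
  proof
    assume "super_paraorthomodular c"
    then show "\<forall>x y. inf (sup x y) (sup x (c x)) = sup x (inf (sup x y) (c x))"
      using SP_imp_I_le[OF pkc] by simp
  next
    assume "\<forall>x y. inf (sup x y) (sup x (c x)) = sup x (inf (sup x y) (c x))"
    then show "super_paraorthomodular c" using I_imp_SP[OF pkc] by blast
  qed
qed

end
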